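(* Let $(E,X,Y)$, with $X=(X_1,\dots,X_d)$, be generated by a structural causal model whose graph is a DAG, whose distribution is faithful (and Markov) with respect to it, and in which $E$ is exogenous. Suppose $X=X_O\,\dot\cup\,X_H$, where only the variables $X_O$ are observed. Define $\mathcal{I}_O:=\{S\subseteq O\mid Y\perp\!\!\!\perp E\mid X_S\}$, call $S\subseteq O$ minimally invariant (among observed sets) if $S\in\mathcal{I}_O$ and no proper subset of $S$ lies in $\mathcal{I}_O$, and let $S_{\mathrm{IAS},O}$ be the union of all such sets (the empty set if there are none). Then $S_{\mathrm{IAS},O}\subseteq\mathrm{AN}_Y$.
   Context: $O\subseteq[d]$ indexes the observed predictors and $X_S=(X_j)_{j\in S}$. $\mathrm{AN}_Y$ denotes the set of ancestors of $Y$ in the DAG over all variables (observed and hidden), indices identified with variables. *)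

theory Defs
  imports Main
begin

datatype var = Env | Resp | Cov nat

definition verts :: "nat \<Rightarrow> var set" where
  "verts d = {Env, Resp} \<union> Cov ` {1..d}"

text \<open>A directed graph is an edge predicate G u v (meaning u \<rightarrow> v).\<close>
definition is_dag :: "nat \<Rightarrow> (var \<Rightarrow> var \<Rightarrow> bool) \<Rightarrow> bool" where
  "is_dag d G \<longleftrightarrow> (\<forall>u v. G u v \<longrightarrow> u \<in> verts d \<and> v \<in> verts d) \<and> (\<forall>v. \<not> G\<^sup>+\<^sup>+ v v)"

definition adj :: "(var \<Rightarrow> var \<Rightarrow> bool) \<Rightarrow> var \<Rightarrow> var \<Rightarrow> bool" where
  "adj G u v \<longleftrightarrow> G u v \<or> G v u"

definition anc :: "(var \<Rightarrow> var \<Rightarrow> bool) \<Rightarrow> var \<Rightarrow> var set" where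
  "anc G v = {u. G\<^sup>*\<^sup>* u v}"

definition is_path :: "(var \<Rightarrow> var \<Rightarrow> bool) \<Rightarrow> var list \<Rightarrow> var \<Rightarrow> var \<Rightarrow> bool" where
  "is_path G p a b \<longleftrightarrow> 2 \<le> length p \<and> hd p = a \<and> last p = b \<and> distinct p \<and>
     (\<forall>i. Suc i < length p \<longrightarrow> adj G (p ! i) (p ! Suc i))"

definition collider :: "(var \<Rightarrow> var \<Rightarrow> bool) \<Rightarrow> var list \<Rightarrow> nat \<Rightarrow> bool" where
  "collider G p i \<longleftrightarrow> G (p ! (i - 1)) (p ! i) \<and> G (p ! Suc i) (p ! i)"

definition blocked :: "(var \<Rightarrow> var \<Rightarrow> bool) \<Rightarrow> var set \<Rightarrow> var list \<Rightarrow> bool" where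
  "blocked G Z p \<longleftrightarrow> (\<exists>i. 0 < i \<and> Suc i < length p \<and>
      ((\<not> collider G p i \<and> p ! i \<in> Z) \<or>
       (collider G p i \<and> (\<forall>z\<in>Z. \<not> G\<^sup>*\<^sup>* (p ! i) z))))"

definition dsep :: "(var \<Rightarrow> var \<Rightarrow> bool) \<Rightarrow> var \<Rightarrow> var \<Rightarrow> var set \<Rightarrow> bool" where
  "dsep G a b Z \<longleftrightarrow> (\<forall>p. is_path G p a b \<longrightarrow> blocked G Z p)"

text \<open>ci a b Z abstracts the conditional independence statement a \<perp> b | Z of the distribution.
  Observed invariant sets, minimally invariant sets, and S_IAS,O.\<close>
definition inv_sets :: "(var \<Rightarrow> var \<Rightarrow> var set \<Rightarrow> bool) \<Rightarrow> nat set \<Rightarrow> nat set set" where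
  "inv_sets ci Obs = {S. S \<subseteq> Obs \<and> ci Resp Env (Cov ` S)}"

definition min_inv :: "(var \<Rightarrow> var \<Rightarrow> var set \<Rightarrow> bool) \<Rightarrow> nat set \<Rightarrow> nat set \<Rightarrow> bool" where
  "min_inv ci Obs S \<longleftrightarrow> S \<in> inv_sets ci Obs \<and> (\<forall>S'. S' \<subset> S \<longrightarrow> S' \<notin> inv_sets ci Obs)"

definition S_IAS :: "(var \<Rightarrow> var \<Rightarrow> var set \<Rightarrow> bool) \<Rightarrow> nat set \<Rightarrow> nat set" where
  "S_IAS ci Obs = \<Union> {S. min_inv ci Obs S}"

end

theory Submission
  imports Defs
begin

lemma right_anc:
  assumes path: "is_path G p Resp Env"
    and exo: "\<forall>u. \<not> G u Env"
    and col: "\<forall>k. 0 < k \<and> Suc k < length p \<and> collider G p k \<longrightarrow> p ! k \<in> anc G Resp"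
  shows "Suc i < length p \<Longrightarrow> G (p ! i) (p ! Suc i) \<Longrightarrow> p ! i \<in> anc G Resp"
proof (induction "length p - i" arbitrary: i rule: less_induct)
  case less
  have last: "p ! (length p - 1) = Env" using path unfolding is_path_def
    by (metis last_conv_nth list.size(3) not_numeral_le_zero)
  show ?case
  proof (cases "Suc (Suc i) < length p")
    case False
    then have "Suc i = length p - 1" using less.prems by simp
    then show ?thesis using less.prems last exo by metis
  next
    case True
    have adj: "adj G (p ! Suc i) (p ! Suc (Suc i))" using path True unfolding is_path_def by blast
    show ?thesis
    proof (cases "G (p ! Suc (Suc i)) (p ! Suc i)")
      case True2: True
      have "collider G p (Suc i)" unfolding collider_def using less.prems True2 by simp
      then have "p ! Suc i \<in> anc G Resp" using col True by blast
      then show ?thesis using less.prems unfolding anc_def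
        by (simp add: converse_rtranclp_into_rtranclp)
    next
      case False
      then have "G (p ! Suc i) (p ! Suc (Suc i))" using adj unfolding adj_def by blast
      then have "p ! Suc i \<in> anc G Resp" using less.hyps[of "Suc i"] True less.prems by simp
      then show ?thesis using less.prems unfolding anc_def
        by (simp add: converse_rtranclp_into_rtranclp)
    qed
  qed
qed

lemma left_anc:
  assumes path: "is_path G p Resp Env"
    and col: "\<forall>k. 0 < k \<and> Suc k < length p \<and> collider G p k \<longrightarrow> p ! k \<in> anc G Resp"
  shows "Suc i < length p \<Longrightarrow> G (p ! Suc i) (p ! i) \<Longrightarrow> p ! Suc i \<in> anc G Resp"
proof (induction i)
  case 0
  have "p ! 0 = Resp" using path unfolding is_path_def
    by (metis hd_conv_nth list.size(3) not_numeral_le_zero)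
  then show ?case using 0 unfolding anc_def by simp
next
  case (Suc i)
  have adj: "adj G (p ! i) (p ! Suc i)" using path Suc.prems unfolding is_path_def by simp
  show ?case
  proof (cases "G (p ! i) (p ! Suc i)")
    case True
    have "collider G p (Suc i)" unfolding collider_def using Suc.prems True by simp
    then have "p ! Suc i \<in> anc G Resp" using col Suc.prems by auto
    then show ?thesis using Suc.prems unfolding anc_def
      by (simp add: converse_rtranclp_into_rtranclp)
  next
    case False
    then have "G (p ! Suc i) (p ! i)" using adj unfolding adj_def by blast
    then have "p ! Suc i \<in> anc G Resp" using Suc.IH Suc.prems by simp
    then show ?thesis using Suc.prems unfolding anc_def
      by (simp add: converse_rtranclp_into_rtranclp)
  qed
qed

lemma dsep_restrict:
  assumes exo: "\<forall>u. \<not> G u Env"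
    and ds: "dsep G Resp Env (Cov ` S)"
  shows "dsep G Resp Env (Cov ` (S \<inter> {j. Cov j \<in> anc G Resp}))"
  unfolding dsep_def
proof (intro allI impI)
  fix p assume path: "is_path G p Resp Env"
  let ?Z' = "Cov ` (S \<inter> {j. Cov j \<in> anc G Resp})"
  show "blocked G ?Z' p"
  proof (rule ccontr)
    assume nb: "\<not> blocked G ?Z' p"
    have col: "\<forall>k. 0 < k \<and> Suc k < length p \<and> collider G p k \<longrightarrow> p ! k \<in> anc G Resp"
    proof (intro allI impI)
      fix k assume k: "0 < k \<and> Suc k < length p \<and> collider G p k"
      then obtain z where z: "z \<in> ?Z'" "G\<^sup>*\<^sup>* (p ! k) z" using nb unfolding blocked_def by blast
      then have "G\<^sup>*\<^sup>* z Resp" unfolding anc_def by auto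
      then show "p ! k \<in> anc G Resp" using z unfolding anc_def by auto
    qed
    have allanc: "p ! i \<in> anc G Resp" if i: "0 < i" "Suc i < length p" for i
    proof (cases "collider G p i")
      case True then show ?thesis using col i by blast
    next
      case False
      have a1: "adj G (p ! (i - 1)) (p ! i)" using path i unfolding is_path_def
        by (metis Suc_diff_1 Suc_lessD)
      have a2: "adj G (p ! i) (p ! Suc i)" using path i unfolding is_path_def by blast
      from False have "G (p ! i) (p ! (i - 1)) \<or> G (p ! i) (p ! Suc i)"
        using a1 a2 unfolding collider_def adj_def by blast
      then show ?thesis
      proof
        assume "G (p ! i) (p ! (i - 1))"
        then show ?thesis using left_anc[OF path col, of "i - 1"] i by simp
      next
        assume "G (p ! i) (p ! Suc i)"
        then show ?thesis using right_anc[OF path exo col, of i] i by simp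
      qed
    qed
    have "blocked G (Cov ` S) p" using ds path unfolding dsep_def by blast
    then obtain i where i: "0 < i" "Suc i < length p"
      and c: "(\<not> collider G p i \<and> p ! i \<in> Cov ` S) \<or>
       (collider G p i \<and> (\<forall>z\<in>Cov ` S. \<not> G\<^sup>*\<^sup>* (p ! i) z))"
      unfolding blocked_def by blast
    have an: "p ! i \<in> anc G Resp" using allanc i by blast
    from c show False
    proof
      assume h: "\<not> collider G p i \<and> p ! i \<in> Cov ` S"
      then have "p ! i \<in> ?Z'" using an by auto
      then show False using nb h i unfolding blocked_def by blast
    next
      assume h: "collider G p i \<and> (\<forall>z\<in>Cov ` S. \<not> G\<^sup>*\<^sup>* (p ! i) z)"
      then have "\<forall>z\<in>?Z'. \<not> G\<^sup>*\<^sup>* (p ! i) z" by auto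
      then show False using nb h i unfolding blocked_def by blast
    qed
  qed
qed

theorem proposition6:
  fixes d :: nat and G :: "var \<Rightarrow> var \<Rightarrow> bool" and Obs :: "nat set"
    and ci :: "var \<Rightarrow> var \<Rightarrow> var set \<Rightarrow> bool"
  assumes dag: "is_dag d G"
    and exogenous: "\<forall>u. \<not> G u Env"
    and observed: "Obs \<subseteq> {1..d}"
    and markov_faithful: "\<forall>Z. Z \<subseteq> Cov ` {1..d} \<longrightarrow> (ci Resp Env Z \<longleftrightarrow> dsep G Resp Env Z)"
  shows "S_IAS ci Obs \<subseteq> {j. Cov j \<in> anc G Resp}"
proof
  fix j assume "j \<in> S_IAS ci Obs"
  then obtain S where mi: "min_inv ci Obs S" and jS: "j \<in> S" unfolding S_IAS_def by blast
  let ?S' = "S \<inter> {j. Cov j \<in> anc G Resp}"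
  have inv: "S \<subseteq> Obs" "ci Resp Env (Cov ` S)" using mi unfolding min_inv_def inv_sets_def by auto
  have sub1: "Cov ` S \<subseteq> Cov ` {1..d}" using inv(1) observed by (intro image_mono) simp
  have "dsep G Resp Env (Cov ` S)" using inv(2) markov_faithful sub1 by simp
  then have "dsep G Resp Env (Cov ` ?S')" by (rule dsep_restrict[of G, OF exogenous])
  moreover have "Cov ` ?S' \<subseteq> Cov ` {1..d}" using sub1 by auto
  ultimately have "ci Resp Env (Cov ` ?S')" using markov_faithful by simp
  then have "?S' \<in> inv_sets ci Obs" using inv unfolding inv_sets_def by auto
  then have "\<not> ?S' \<subset> S" using mi unfolding min_inv_def by blast
  then have "?S' = S" by blast
  then show "j \<in> {j. Cov j \<in> anc G Resp}" using jS by blast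
qed

end
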